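(* Let $\mathcal W\in{\rm Gr}^{(0)}_+$ with wave function $\Psi$ and canonical operator $\mathtt Q_{\mathcal W}$. If $\mathtt B=\sum_{k\ge0}\mathtt B_k\partial_z^k\in\mathcal D$ satisfies $\mathtt B_0=\Psi$ and $\mathtt Q_{\mathcal W}\,\mathtt B=\mathtt B\,z$, then $\mathtt B=\mathtt G_{\mathcal W}$.
   Context: $H_+=\mathbb C[z]$, $H_-=z^{-1}\mathbb C[[z^{-1}]]$, $H=H_+\oplus H_-$. ${\rm Gr}^{(0)}_+$ is the set of closed subspaces $\mathcal W\subset H$ with $\pi_+:\mathcal W\to H_+$ (projection along $H_-$) an isomorphism. $\mathcal D=\mathbb C((z^{-1}))[[\partial_z]]$ is the ring of differential operators $\sum_{m\ge0}a_m(z)\partial_z^m$, $a_m\in H$, acting on $H$; $\mathcal D_\pm=H_\pm[[\partial_z]]$. $\mathtt G_{\mathcal W}$ is the unique operator with $\mathtt G_{\mathcal W}-1\in\mathcal D_-$ and $\mathcal W=\mathtt G_{\mathcal W}\cdot H_+$ (Sato's theorem); $\mathtt Q_{\mathcal W}:=\mathtt G_{\mathcal W}z\mathtt G_{\mathcal W}^{-1}$. The wave function $\Psi$ is the unique element of $\mathcal W\cap(1+H_-)$. *)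

theory Defs
  imports "HOL-Computational_Algebra.Formal_Laurent_Series"
begin

unbundle fps_syntax

text \<open>
  H = C((z^-1)) is modelled by the library type of formal Laurent series
  complex fls in the variable w = z^-1: the coefficient of z^n in f is f $$ (-n).
  Hence H_+ = C[z] consists of the series with f $$ k = 0 for k > 0, and
  H_- = z^-1 C[[z^-1]] of those with f $$ k = 0 for k <= 0.
  The topology on H is the library (w-adic) metric topology on fls.
\<close>

type_synonym H = "complex fls"

definition zH :: H where "zH = fls_X_inv"

definition Hplus :: "H set" where "Hplus = {f. \<forall>k>0. f $$ k = 0}"

definition Hminus :: "H set" where "Hminus = {f. \<forall>k\<le>0. f $$ k = 0}"

definition piplus :: "H \<Rightarrow> H" where
  "piplus f = Abs_fls (\<lambda>k. if k \<le> 0 then f $$ k else 0)"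

text \<open>d/dz = - w^2 d/dw.\<close>
definition zderiv :: "H \<Rightarrow> H" where
  "zderiv f = - (fls_X ^ 2 * fls_deriv f)"

definition fsummable :: "('i \<Rightarrow> H) \<Rightarrow> 'i set \<Rightarrow> bool" where
  "fsummable F I \<longleftrightarrow> (\<exists>N. \<forall>i\<in>I. \<forall>k<N. F i $$ k = 0) \<and> (\<forall>k. finite {i\<in>I. F i $$ k \<noteq> 0})"

definition fsum :: "('i \<Rightarrow> H) \<Rightarrow> 'i set \<Rightarrow> H" where
  "fsum F I = Abs_fls (\<lambda>k. \<Sum>i\<in>{i\<in>I. F i $$ k \<noteq> 0}. F i $$ k)"

text \<open>Operators in D = C((z^-1))[[d/dz]]: A represents sum_m (A m) (d/dz)^m.\<close>
type_synonym DOp = "nat \<Rightarrow> H"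

definition Dminus :: "DOp set" where "Dminus = {A. \<forall>m. A m \<in> Hminus}"

definition op_one :: DOp where "op_one = (\<lambda>m. if m = 0 then 1 else 0)"

definition op_z :: DOp where "op_z = (\<lambda>m. if m = 0 then zH else 0)"

definition op_sub :: "DOp \<Rightarrow> DOp \<Rightarrow> DOp" where "op_sub A B = (\<lambda>m. A m - B m)"

definition op_apply :: "DOp \<Rightarrow> H \<Rightarrow> H" where
  "op_apply A f = fsum (\<lambda>m. A m * (zderiv ^^ m) f) UNIV"

text \<open>Composition in D (Leibniz rule: d^m b = sum_k (m choose k) b^(k) d^(m-k)).\<close>
definition op_mult :: "DOp \<Rightarrow> DOp \<Rightarrow> DOp" where
  "op_mult A B = (\<lambda>p. fsum (\<lambda>(m, n, k). of_nat (m choose k) * A m * (zderiv ^^ k) (B n))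
                         {(m, n, k). k \<le> m \<and> m + n = p + k})"

definition op_inv :: "DOp \<Rightarrow> DOp" where
  "op_inv G = (THE Gi. op_sub Gi op_one \<in> Dminus \<and> op_mult G Gi = op_one \<and> op_mult Gi G = op_one)"

definition Gr0plus :: "H set set" where
  "Gr0plus = {W. 0 \<in> W \<and> (\<forall>x\<in>W. \<forall>y\<in>W. x + y \<in> W) \<and> (\<forall>c. \<forall>x\<in>W. fls_const c * x \<in> W)
               \<and> closed W \<and> bij_betw piplus W Hplus}"

definition satoG :: "H set \<Rightarrow> DOp" where
  "satoG W = (THE G. op_sub G op_one \<in> Dminus \<and> W = op_apply G ` Hplus)"

definition opQ :: "H set \<Rightarrow> DOp" where
  "opQ W = op_mult (op_mult (satoG W) op_z) (op_inv (satoG W))"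

definition wavePsi :: "H set \<Rightarrow> H" where
  "wavePsi W = (THE psi. psi \<in> W \<and> psi - 1 \<in> Hminus)"

end

theory Submission
  imports Defs
begin

definition vge :: "H \<Rightarrow> int \<Rightarrow> bool" where "vge f N \<longleftrightarrow> (\<forall>k<N. f $$ k = 0)"

lemma vge_subdeg: "vge f a \<Longrightarrow> f \<noteq> 0 \<Longrightarrow> a \<le> fls_subdegree f"
  unfolding vge_def by (intro fls_subdegree_geI) auto

lemma vge_mult: "vge f a \<Longrightarrow> vge g b \<Longrightarrow> vge (f*g) (a+b)"
proof -
  assume f: "vge f a" and g: "vge g b"
  show ?thesis
  proof (cases "f = 0 \<or> g = 0")
    case True then show ?thesis by (auto simp: vge_def)
  next
    case False
    then show ?thesis using vge_subdeg[OF f] vge_subdeg[OF g]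
      unfolding vge_def by (intro allI impI fls_times_nth_eq0) auto
  qed
qed

lemma vge_mono: "vge f a \<Longrightarrow> b \<le> a \<Longrightarrow> vge f b"
  unfolding vge_def by auto
lemma vge_add: "vge f a \<Longrightarrow> vge g a \<Longrightarrow> vge (f+g) a"
  unfolding vge_def by auto
lemma vge_diff: "vge f a \<Longrightarrow> vge g a \<Longrightarrow> vge (f-g) a"
  unfolding vge_def by auto
lemma vge_0[simp]: "vge 0 a"
  unfolding vge_def by auto
lemma vge_sum: "(\<And>i. i\<in>S \<Longrightarrow> vge (F i) a) \<Longrightarrow> vge (sum F S) a"
  unfolding vge_def by (auto simp: fls_nth_sum)

lemma mult_trunc:
  assumes "vge c a" "\<And>j. j \<le> k - a \<Longrightarrow> s $$ j = s' $$ j"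
  shows "(c*s) $$ k = (c*s') $$ k"
proof -
  have "vge (s - s') (k - a + 1)" using assms(2) unfolding vge_def by auto
  then have "vge (c*(s-s')) (k+1)" using vge_mult[OF assms(1)] by fastforce
  then have "(c*(s-s')) $$ k = 0" unfolding vge_def by auto
  then show ?thesis by (simp add: algebra_simps)
qed

lemma zderiv_nth: "zderiv f $$ k = - of_int (k-1) * f $$ (k-1)"
  unfolding zderiv_def
  by (simp add: fls_X_power_times_conv_shift algebra_simps)

lemma zderiv_add: "zderiv (f + g) = zderiv f + zderiv g"
  by (rule fls_eqI) (simp add: zderiv_nth algebra_simps)
lemma zderiv_diff: "zderiv (f - g) = zderiv f - zderiv g"
  by (rule fls_eqI) (simp add: zderiv_nth algebra_simps)
lemma zderiv_0[simp]: "zderiv 0 = 0"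
  by (rule fls_eqI) (simp add: zderiv_nth)
lemma zderiv_sum: "zderiv (sum F S) = (\<Sum>i\<in>S. zderiv (F i))"
  by (induction S rule: infinite_finite_induct) (auto simp: zderiv_add)
lemma zderiv_mult: "zderiv (f * g) = zderiv f * g + f * zderiv g"
  unfolding zderiv_def by (simp add: algebra_simps)
lemma zderiv_const[simp]: "zderiv (fls_const c) = 0"
  by (rule fls_eqI) (simp add: zderiv_nth)
lemma zderiv_of_nat[simp]: "zderiv (of_nat c) = 0"
  by (rule fls_eqI) (simp add: zderiv_nth fls_of_nat_nth)
lemma zderiv_one[simp]: "zderiv 1 = 0"
  by (rule fls_eqI) (simp add: zderiv_nth)

lemma zpow_lin:
  "(zderiv^^m) (f + g) = (zderiv^^m) f + (zderiv^^m) g"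
  "(zderiv^^m) (f - g) = (zderiv^^m) f - (zderiv^^m) g"
  "(zderiv^^m) (sum F S) = (\<Sum>i\<in>S. (zderiv^^m) (F i))"
  "(zderiv^^m) (of_nat c * f) = of_nat c * (zderiv^^m) f"
  "(zderiv^^m) (fls_const d * f) = fls_const d * (zderiv^^m) f"
  "(zderiv^^m) 0 = 0"
  by (induction m) (auto simp: zderiv_add zderiv_diff zderiv_sum zderiv_mult)

fun dc :: "nat \<Rightarrow> int \<Rightarrow> complex" where
  "dc 0 k = 1"
| "dc (Suc m) k = - of_int (k-1) * dc m (k-1)"

lemma zpow_nth: "(zderiv^^m) f $$ k = dc m k * f $$ (k - int m)"
  by (induction m arbitrary: k) (auto simp: zderiv_nth algebra_simps)

lemma vge_zpow: "vge f a \<Longrightarrow> vge ((zderiv^^m) f) (a + int m)"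
  unfolding vge_def by (auto simp: zpow_nth)

lemma Suc_choose: "Suc n choose k = (n choose k) + (if k = 0 then 0 else (n choose (k-1)))"
  by (cases k) simp_all

lemma sum_Suc_reindex':
  fixes f :: "nat \<Rightarrow> 'a::ab_group_add"
  shows "sum f {0..n} = f 0 - f (Suc n) + sum (\<lambda>i. f (Suc i)) {0..n}"
  by (induct n) auto

lemma leibniz:
  "(zderiv^^n) (f * g) = (\<Sum>i = 0..n. of_nat (n choose i) * (zderiv^^i) f * (zderiv^^(n-i)) g)"
proof (induction n)
  case 0 then show ?case by simp
next
  case (Suc n)
  define A where "A i = (zderiv^^i) f * (zderiv^^(Suc n-i)) g" for i
  have "(zderiv^^Suc n) (f*g) = zderiv ((zderiv^^n) (f*g))" by simp
  also have "\<dots> = (\<Sum>i = 0..n. of_nat (n choose i) * (zderiv ((zderiv^^i) f) * (zderiv^^(n-i)) g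
          + (zderiv^^i) f * zderiv ((zderiv^^(n-i)) g)))"
    by (simp add: Suc.IH zderiv_sum zderiv_mult algebra_simps)
  also have "\<dots> = (\<Sum>i = 0..n. of_nat (n choose i) * A (Suc i)) + (\<Sum>i = 0..n. of_nat (n choose i) * A i)"
    unfolding A_def by (auto simp: algebra_simps sum.distrib Suc_diff_le intro!: sum.cong)
  also have "(\<Sum>i = 0..n. of_nat (n choose i) * A (Suc i)) = (\<Sum>i = 0..Suc n. of_nat (if i = 0 then 0 else n choose (i-1)) * A i)"
    by (subst sum.atLeast0_atMost_Suc_shift) simp
  also have "(\<Sum>i = 0..n. of_nat (n choose i) * A i) = (\<Sum>i = 0..Suc n. of_nat (n choose i) * A i)"
    by simp
  also have "(\<Sum>i = 0..Suc n. of_nat (if i = 0 then 0 else n choose (i-1)) * A i) + (\<Sum>i = 0..Suc n. of_nat (n choose i) * A i)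
     = (\<Sum>i = 0..Suc n. of_nat (Suc n choose i) * A i)"
    by (simp add: Suc_choose sum.distrib[symmetric] algebra_simps)
  finally show ?case unfolding A_def by (simp add: mult.assoc)
qed

lemma fsum_nth:
  assumes "fsummable F I"
  shows "fsum F I $$ k = (\<Sum>i\<in>{i\<in>I. F i $$ k \<noteq> 0}. F i $$ k)"
proof -
  from assms obtain N where N: "\<forall>i\<in>I. \<forall>k<N. F i $$ k = 0" unfolding fsummable_def by blast
  have "\<forall>n<N. (\<Sum>i\<in>{i\<in>I. F i $$ n \<noteq> 0}. F i $$ n) = 0"
  proof (intro allI impI)
    fix n assume "n < N"
    then have "{i\<in>I. F i $$ n \<noteq> 0} = {}" using N by auto
    then show "(\<Sum>i\<in>{i\<in>I. F i $$ n \<noteq> 0}. F i $$ n) = 0" by simp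
  qed
  then show ?thesis unfolding fsum_def by (subst nth_Abs_fls_lower_bound) auto
qed

lemma fsum_nth_sub:
  assumes "fsummable F I" "finite S" "S \<subseteq> I" "\<And>i. i\<in>I \<Longrightarrow> i \<notin> S \<Longrightarrow> F i $$ k = 0"
  shows "fsum F I $$ k = (\<Sum>i\<in>S. F i $$ k)"
  unfolding fsum_nth[OF assms(1)]
  by (rule sum.mono_neutral_left) (use assms in auto)

lemma fsum_finite:
  assumes "finite S" "S \<subseteq> I" "\<And>i. i\<in>I \<Longrightarrow> i \<notin> S \<Longrightarrow> F i = 0"
  shows "fsum F I = sum F S"
proof -
  have "(\<lambda>k. \<Sum>i\<in>{i\<in>I. F i $$ k \<noteq> 0}. F i $$ k) = fls_nth (sum F S)"
  proof
    fix k
    have z: "\<And>i. i\<in>I \<Longrightarrow> i\<notin>S \<Longrightarrow> F i $$ k = 0" using assms(3) by simp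
    have "(\<Sum>i\<in>{i\<in>I. F i $$ k \<noteq> 0}. F i $$ k) = (\<Sum>i\<in>S. F i $$ k)"
    proof (rule sum.mono_neutral_left)
      show "{i\<in>I. F i $$ k \<noteq> 0} \<subseteq> S" using z by blast
    qed (use assms in auto)
    then show "(\<Sum>i\<in>{i\<in>I. F i $$ k \<noteq> 0}. F i $$ k) = sum F S $$ k" by (simp add: fls_nth_sum)
  qed
  then show ?thesis unfolding fsum_def by (simp add: fls_nth_inverse)
qed

lemma fsummableI:
  assumes "\<And>i. i\<in>I \<Longrightarrow> vge (F i) N"
    and "\<And>k. \<exists>S. finite S \<and> (\<forall>i\<in>I. i \<notin> S \<longrightarrow> F i $$ k = 0)"
  shows "fsummable F I"
  unfolding fsummable_def
proof (intro conjI allI exI[of _ N])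
  show "\<forall>i\<in>I. \<forall>k<N. F i $$ k = 0" using assms(1) unfolding vge_def by auto
next
  fix k
  obtain S where "finite S" "\<forall>i\<in>I. i \<notin> S \<longrightarrow> F i $$ k = 0" using assms(2) by blast
  then have "{i\<in>I. F i $$ k \<noteq> 0} \<subseteq> S" by blast
  then show "finite {i\<in>I. F i $$ k \<noteq> 0}" using \<open>finite S\<close> by (rule finite_subset)
qed

lemma vge_fsum:
  assumes "fsummable F I" "\<And>i. i\<in>I \<Longrightarrow> vge (F i) N"
  shows "vge (fsum F I) N"
  unfolding vge_def
proof (intro allI impI)
  fix k assume "k < N"
  then have "{i\<in>I. F i $$ k \<noteq> 0} = {}" using assms(2) unfolding vge_def by auto
  then show "fsum F I $$ k = 0" by (simp add: fsum_nth[OF assms(1)])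
qed

lemma fsum_cong: "(\<And>i. i\<in>I \<Longrightarrow> F i = G i) \<Longrightarrow> fsum F I = fsum G I"
proof -
  assume a: "\<And>i. i\<in>I \<Longrightarrow> F i = G i"
  have "\<And>k. {i\<in>I. F i $$ k \<noteq> 0} = {i\<in>I. G i $$ k \<noteq> 0}" using a by auto
  then have "(\<lambda>k. \<Sum>i\<in>{i\<in>I. F i $$ k \<noteq> 0}. F i $$ k) = (\<lambda>k. \<Sum>i\<in>{i\<in>I. G i $$ k \<noteq> 0}. G i $$ k)"
    using a by (intro ext sum.cong) auto
  then show ?thesis unfolding fsum_def by simp
qed

definition bnd :: "DOp \<Rightarrow> int \<Rightarrow> bool" where "bnd A N \<longleftrightarrow> (\<forall>m. vge (A m) N)"

lemma apply_term_vge: "bnd A a \<Longrightarrow> vge f c \<Longrightarrow> vge (A m * (zderiv^^m) f) (a + c + int m)"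
  unfolding bnd_def using vge_mult[of "A m" a "(zderiv^^m) f" "c + int m"] vge_zpow[of f c m]
  by (simp add: add.assoc)

lemma apply_summable:
  assumes "bnd A a" "vge f c"
  shows "fsummable (\<lambda>m. A m * (zderiv^^m) f) UNIV"
proof (rule fsummableI)
  fix i :: nat show "vge (A i * (zderiv^^i) f) (a + c)"
    using apply_term_vge[OF assms, of i] vge_mono by fastforce
next
  fix k
  have "(A i * (zderiv^^i) f) $$ k = 0" if "i \<notin> {..nat (k - a - c)}" for i
  proof -
    have "k < a + c + int i" using that by auto
    then show ?thesis using apply_term_vge[OF assms, of i] unfolding vge_def by blast
  qed
  then have "finite {..nat (k - a - c)} \<and> (\<forall>i\<in>UNIV. i \<notin> {..nat (k - a - c)} \<longrightarrow> (A i * (zderiv^^i) f) $$ k = 0)"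
    by blast
  then show "\<exists>S. finite S \<and> (\<forall>i\<in>UNIV. i \<notin> S \<longrightarrow> (A i * (zderiv^^i) f) $$ k = 0)"
    by blast
qed

lemma apply_nth:
  assumes "bnd A a" "vge f c" "k - a - c \<le> int M"
  shows "op_apply A f $$ k = (\<Sum>m\<le>M. (A m * (zderiv^^m) f) $$ k)"
  unfolding op_apply_def
proof (rule fsum_nth_sub[OF apply_summable[OF assms(1,2)]])
  fix i assume "i \<notin> {..M}"
  then have "k < a + c + int i" using assms(3) by auto
  then show "(A i * (zderiv^^i) f) $$ k = 0" using apply_term_vge[OF assms(1,2), of i] unfolding vge_def by blast
qed auto

lemma apply_vge:
  assumes "bnd A a" "vge f c"
  shows "vge (op_apply A f) (a + c)"
  unfolding op_apply_def
proof (rule vge_fsum[OF apply_summable[OF assms]])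
  fix i :: nat
  show "vge (A i * (zderiv^^i) f) (a + c)"
    using apply_term_vge[OF assms, of i] by (rule vge_mono) simp
qed

definition Tset :: "nat \<Rightarrow> (nat \<times> nat \<times> nat) set" where
  "Tset p = {(m, n, k). k \<le> m \<and> m + n = p + k}"
definition Tfin :: "nat \<Rightarrow> nat \<Rightarrow> (nat \<times> nat \<times> nat) set" where
  "Tfin p K = {(m, n, k). k \<le> m \<and> m + n = p + k \<and> k \<le> K}"
definition mt :: "DOp \<Rightarrow> DOp \<Rightarrow> nat \<times> nat \<times> nat \<Rightarrow> H" where
  "mt A B = (\<lambda>(m, n, k). of_nat (m choose k) * A m * (zderiv ^^ k) (B n))"

lemma op_mult_eq: "op_mult A B p = fsum (mt A B) (Tset p)"
  unfolding op_mult_def mt_def Tset_def by simp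

lemma Tfin_finite: "finite (Tfin p K)"
proof -
  have "Tfin p K \<subseteq> {..p+K} \<times> {..p} \<times> {..K}" unfolding Tfin_def by auto
  then show ?thesis by (rule finite_subset) auto
qed

lemma Tfin_sub: "Tfin p K \<subseteq> Tset p" unfolding Tfin_def Tset_def by auto

lemma vge_of_nat: "vge (of_nat c) 0"
  unfolding vge_def by (simp add: fls_of_nat_nth)

lemma mt_vge:
  assumes "bnd A a" "bnd B b"
  shows "vge (mt A B (m, n, i)) (a + b + int i)"
proof -
  have "vge (of_nat (m choose i) * A m) (0 + a)"
    using assms(1) unfolding bnd_def by (intro vge_mult vge_of_nat) auto
  moreover have "vge ((zderiv ^^ i) (B n)) (b + int i)"
    using assms(2) unfolding bnd_def by (intro vge_zpow) auto
  ultimately have "vge (of_nat (m choose i) * A m * (zderiv ^^ i) (B n)) (0 + a + (b + int i))"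
    by (rule vge_mult)
  then show ?thesis unfolding mt_def by (simp add: add.assoc)
qed

lemma mt_zero:
  assumes "bnd A a" "bnd B b" "j - a - b < int i"
  shows "mt A B (m, n, i) $$ j = 0"
  using mt_vge[OF assms(1,2), of m n i] assms(3) unfolding vge_def by auto

lemma mult_summable:
  assumes "bnd A a" "bnd B b"
  shows "fsummable (mt A B) (Tset p)"
proof (rule fsummableI)
  fix t assume "t \<in> Tset p"
  obtain m n i where t: "t = (m, n, i)" by (cases t) auto
  show "vge (mt A B t) (a + b)" unfolding t using mt_vge[OF assms, of m n i] by (rule vge_mono) simp
next
  fix j
  have "\<forall>t\<in>Tset p. t \<notin> Tfin p (nat (j - a - b)) \<longrightarrow> mt A B t $$ j = 0"
  proof (intro ballI impI)
    fix t assume t1: "t \<in> Tset p" and t2: "t \<notin> Tfin p (nat (j - a - b))"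
    obtain m n i where t: "t = (m, n, i)" by (cases t) auto
    have "j - a - b < int i" using t1 t2 unfolding t Tset_def Tfin_def by auto
    then show "mt A B t $$ j = 0" unfolding t by (rule mt_zero[OF assms])
  qed
  then show "\<exists>S. finite S \<and> (\<forall>t\<in>Tset p. t \<notin> S \<longrightarrow> mt A B t $$ j = 0)"
    using Tfin_finite by blast
qed

lemma mult_nth:
  assumes "bnd A a" "bnd B b" "j - a - b \<le> int K"
  shows "op_mult A B p $$ j = (\<Sum>t\<in>Tfin p K. mt A B t) $$ j"
proof -
  have "op_mult A B p $$ j = (\<Sum>t\<in>Tfin p K. mt A B t $$ j)"
    unfolding op_mult_eq
  proof (rule fsum_nth_sub[OF mult_summable[OF assms(1,2)] Tfin_finite Tfin_sub])
    fix t assume t1: "t \<in> Tset p" and t2: "t \<notin> Tfin p K"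
    obtain m n i where t: "t = (m, n, i)" by (cases t) auto
    have "j - a - b < int i" using t1 t2 assms(3) unfolding t Tset_def Tfin_def by auto
    then show "mt A B t $$ j = 0" unfolding t by (rule mt_zero[OF assms(1,2)])
  qed
  then show ?thesis by (simp add: fls_nth_sum)
qed

lemma bnd_mult:
  assumes "bnd A a" "bnd B b"
  shows "bnd (op_mult A B) (a + b)"
  unfolding bnd_def
proof
  fix p
  show "vge (op_mult A B p) (a + b)" unfolding op_mult_eq
  proof (rule vge_fsum[OF mult_summable[OF assms]])
    fix t assume "t \<in> Tset p"
    obtain m n i where t: "t = (m, n, i)" by (cases t) auto
    show "vge (mt A B t) (a + b)" unfolding t using mt_vge[OF assms, of m n i] by (rule vge_mono) simp
  qed
qed

lemma fp_add: "(zderiv^^a) ((zderiv^^b) x) = (zderiv^^(a+b)) x"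
  by (simp add: funpow_add)

lemma compose:
  assumes A: "bnd A a" and B: "bnd B b" and f: "vge f c"
  shows "op_apply (op_mult A B) f = op_apply A (op_apply B f)"
proof (rule fls_eqI)
  fix k
  define K where "K = nat (k - a - b - c)"
  have K: "k - a - b - c \<le> int K" unfolding K_def by simp
  define tm where "tm = (\<lambda>(m, n, i). of_nat (m choose i) * A m * (zderiv^^i) (B n) * (zderiv^^(m - i + n)) f)"
  define Fin where "Fin = {(m, n, i). i \<le> m \<and> m + n \<le> K}"
  define pr where "pr = (\<lambda>(m::nat, n::nat, i::nat). m + n - i)"
  have Fin_fin: "finite Fin"
  proof -
    have "Fin \<subseteq> {..K} \<times> {..K} \<times> {..K}" unfolding Fin_def by auto
    then show ?thesis by (rule finite_subset) auto
  qed
  have tm_vge: "vge (tm (m, n, i)) (a + b + c + int (m + n))" if "i \<le> m" for m n i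
  proof -
    have "vge (mt A B (m, n, i) * (zderiv^^(m - i + n)) f) (a + b + int i + (c + int (m - i + n)))"
      by (intro vge_mult mt_vge[OF A B] vge_zpow f)
    moreover have "a + b + int i + (c + int (m - i + n)) = a + b + c + int (m + n)" using that by simp
    ultimately show ?thesis unfolding tm_def mt_def by (simp add: add.assoc)
  qed
  have tm_zero: "tm (m, n, i) $$ k = 0" if "i \<le> m" "K < m + n" for m n i
    using tm_vge[OF that(1)] that(2) K unfolding vge_def by auto
  have bAB: "bnd (op_mult A B) (a + b)" by (rule bnd_mult[OF A B])
  have "op_apply (op_mult A B) f $$ k = (\<Sum>p\<le>K. (op_mult A B p * (zderiv^^p) f) $$ k)"
    by (rule apply_nth[OF bAB f]) (use K in simp)
  also have "\<dots> = (\<Sum>p\<le>K. \<Sum>t\<in>{t\<in>Fin. pr t = p}. tm t $$ k)"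
  proof (rule sum.cong[OF refl])
    fix p assume "p \<in> {..K}"
    have "(op_mult A B p * (zderiv^^p) f) $$ k = ((zderiv^^p) f * op_mult A B p) $$ k"
      by (simp add: mult.commute)
    also have "\<dots> = ((zderiv^^p) f * (\<Sum>t\<in>Tfin p K. mt A B t)) $$ k"
    proof (rule mult_trunc[OF vge_zpow[OF f]])
      fix j assume "j \<le> k - (c + int p)"
      then show "op_mult A B p $$ j = (\<Sum>t\<in>Tfin p K. mt A B t) $$ j"
        by (intro mult_nth[OF A B]) (use K in simp)
    qed
    also have "\<dots> = (\<Sum>t\<in>Tfin p K. tm t $$ k)"
    proof -
      have "(zderiv^^p) f * (\<Sum>t\<in>Tfin p K. mt A B t) = (\<Sum>t\<in>Tfin p K. tm t)"
        unfolding sum_distrib_left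
      proof (rule sum.cong[OF refl])
        fix t assume "t \<in> Tfin p K"
        then obtain m n i where t: "t = (m, n, i)" "i \<le> m" "m + n = p + i" unfolding Tfin_def by auto
        then have "m - i + n = p" by simp
        then show "(zderiv^^p) f * mt A B t = tm t" unfolding t tm_def mt_def by (simp add: mult.commute)
      qed
      then show ?thesis by (simp add: fls_nth_sum)
    qed
    also have "\<dots> = (\<Sum>t\<in>{t\<in>Fin. pr t = p}. tm t $$ k)"
    proof (rule sum.mono_neutral_right[OF Tfin_finite])
      show "{t\<in>Fin. pr t = p} \<subseteq> Tfin p K" unfolding Fin_def pr_def Tfin_def by auto
      show "\<forall>t\<in>Tfin p K - {t\<in>Fin. pr t = p}. tm t $$ k = 0"
      proof
        fix t assume tt: "t \<in> Tfin p K - {t\<in>Fin. pr t = p}"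
        obtain m n i where t: "t = (m, n, i)" by (cases t)
        have "i \<le> m" "K < m + n" using tt unfolding t Tfin_def Fin_def pr_def by auto
        then show "tm t $$ k = 0" unfolding t by (rule tm_zero)
      qed
    qed
    finally show "(op_mult A B p * (zderiv^^p) f) $$ k = (\<Sum>t\<in>{t\<in>Fin. pr t = p}. tm t $$ k)" .
  qed
  also have "\<dots> = (\<Sum>t\<in>Fin. tm t $$ k)"
    by (rule sum.group[OF Fin_fin]) (auto simp: Fin_def pr_def)
  finally have L: "op_apply (op_mult A B) f $$ k = (\<Sum>t\<in>Fin. tm t $$ k)" .
  define g where "g = op_apply B f"
  define gK where "gK = (\<Sum>n\<le>K. B n * (zderiv^^n) f)"
  have g: "vge g (b + c)" unfolding g_def by (rule apply_vge[OF B f])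
  have "op_apply A g $$ k = (\<Sum>m\<le>K. (A m * (zderiv^^m) g) $$ k)"
    by (rule apply_nth[OF A g]) (use K in simp)
  also have "\<dots> = (\<Sum>m\<le>K. \<Sum>n\<le>K. \<Sum>i\<in>{0..m}. tm (m, n, i) $$ k)"
  proof (rule sum.cong[OF refl])
    fix m assume "m \<in> {..K}"
    have "(A m * (zderiv^^m) g) $$ k = (A m * (zderiv^^m) gK) $$ k"
    proof (rule mult_trunc)
      show "vge (A m) a" using A unfolding bnd_def by auto
      fix j assume j: "j \<le> k - a"
      have "g $$ (j - int m) = (\<Sum>n\<le>K. (B n * (zderiv^^n) f) $$ (j - int m))"
        unfolding g_def by (rule apply_nth[OF B f]) (use K j in simp)
      also have "\<dots> = gK $$ (j - int m)" unfolding gK_def by (simp add: fls_nth_sum)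
      finally show "(zderiv^^m) g $$ j = (zderiv^^m) gK $$ j" by (simp add: zpow_nth)
    qed
    also have "A m * (zderiv^^m) gK = (\<Sum>n\<le>K. \<Sum>i\<in>{0..m}. tm (m, n, i))"
      unfolding gK_def zpow_lin(3) leibniz sum_distrib_left tm_def
    proof (intro sum.cong refl)
      fix n i
      show "A m * (of_nat (m choose i) * (zderiv^^i) (B n) * (zderiv^^(m - i)) ((zderiv^^n) f)) =
            (case (m, n, i) of (m, n, i) \<Rightarrow> of_nat (m choose i) * A m * (zderiv^^i) (B n) * (zderiv^^(m - i + n)) f)"
        by (simp add: fp_add algebra_simps)
    qed
    finally show "(A m * (zderiv^^m) g) $$ k = (\<Sum>n\<le>K. \<Sum>i\<in>{0..m}. tm (m, n, i) $$ k)"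
      by (simp add: fls_nth_sum)
  qed
  also have "\<dots> = (\<Sum>t\<in>Sigma {..K} (\<lambda>m. Sigma {..K} (\<lambda>_. {0..m})). tm t $$ k)"
    by (simp add: sum.Sigma)
  also have "\<dots> = (\<Sum>t\<in>Fin. tm t $$ k)"
  proof (rule sum.mono_neutral_right)
    show "finite (Sigma {..K} (\<lambda>m. Sigma {..K} (\<lambda>_. {0..m})))" by auto
    show "Fin \<subseteq> Sigma {..K} (\<lambda>m. Sigma {..K} (\<lambda>_. {0..m}))" unfolding Fin_def by auto
    show "\<forall>t\<in>Sigma {..K} (\<lambda>m. Sigma {..K} (\<lambda>_. {0..m})) - Fin. tm t $$ k = 0"
    proof
      fix t assume tt: "t \<in> Sigma {..K} (\<lambda>m. Sigma {..K} (\<lambda>_. {0..m})) - Fin"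
      obtain m n i where t: "t = (m, n, i)" by (cases t)
      have "i \<le> m" "K < m + n" using tt unfolding t Fin_def by auto
      then show "tm t $$ k = 0" unfolding t by (rule tm_zero)
    qed
  qed
  finally have R: "op_apply A g $$ k = (\<Sum>t\<in>Fin. tm t $$ k)" .
  show "op_apply (op_mult A B) f $$ k = op_apply A (op_apply B f) $$ k"
    using L R unfolding g_def by simp
qed

lemma vge_subdegree: "vge f (fls_subdegree f)"
  unfolding vge_def by simp

lemma vge_const: "vge (fls_const x) 0"
  unfolding vge_def by simp

lemma apply_lin:
  assumes A: "bnd A a" and f: "vge f c" and g: "vge g c"
  shows "op_apply A (f + g) = op_apply A f + op_apply A g"
    and "op_apply A (f - g) = op_apply A f - op_apply A g"
    and "op_apply A (fls_const x * f) = fls_const x * op_apply A f"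
proof -
  have fg1: "vge (f + g) c" and fg2: "vge (f - g) c" using f g by (auto intro: vge_add vge_diff)
  have fx: "vge (fls_const x * f) c" using vge_mult[OF vge_const f] by simp
  show "op_apply A (f + g) = op_apply A f + op_apply A g"
  proof (rule fls_eqI)
    fix k
    define M where "M = nat (k - a - c)"
    have M: "k - a - c \<le> int M" unfolding M_def by simp
    show "op_apply A (f + g) $$ k = (op_apply A f + op_apply A g) $$ k"
      by (simp add: apply_nth[OF A fg1 M] apply_nth[OF A f M] apply_nth[OF A g M] zpow_lin
          distrib_left sum.distrib)
  qed
  show "op_apply A (f - g) = op_apply A f - op_apply A g"
  proof (rule fls_eqI)
    fix k
    define M where "M = nat (k - a - c)"
    have M: "k - a - c \<le> int M" unfolding M_def by simp
    show "op_apply A (f - g) $$ k = (op_apply A f - op_apply A g) $$ k"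
      by (simp add: apply_nth[OF A fg2 M] apply_nth[OF A f M] apply_nth[OF A g M] zpow_lin
          right_diff_distrib sum_subtractf)
  qed
  show "op_apply A (fls_const x * f) = fls_const x * op_apply A f"
  proof (rule fls_eqI)
    fix k
    define M where "M = nat (k - a - c)"
    have M: "k - a - c \<le> int M" unfolding M_def by simp
    have "op_apply A (fls_const x * f) $$ k = (\<Sum>m\<le>M. (fls_const x * (A m * (zderiv^^m) f)) $$ k)"
      by (simp add: apply_nth[OF A fx M] zpow_lin mult.left_commute)
    also have "\<dots> = x * (\<Sum>m\<le>M. (A m * (zderiv^^m) f) $$ k)"
      by (simp add: sum_distrib_left)
    finally show "op_apply A (fls_const x * f) $$ k = (fls_const x * op_apply A f) $$ k"
      by (simp add: apply_nth[OF A f M])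
  qed
qed

lemma apply_sub_op:
  assumes A: "bnd A a" and B: "bnd B a" and f: "vge f c"
  shows "op_apply (op_sub A B) f = op_apply A f - op_apply B f"
proof -
  have AB: "bnd (op_sub A B) a" using A B unfolding bnd_def op_sub_def by (auto intro: vge_diff)
  show ?thesis
  proof (rule fls_eqI)
    fix k
    define M where "M = nat (k - a - c)"
    have M: "k - a - c \<le> int M" unfolding M_def by simp
    have "op_apply (op_sub A B) f $$ k = (\<Sum>m\<le>M. (op_sub A B m * (zderiv^^m) f) $$ k)"
      by (rule apply_nth[OF AB f M])
    then show "op_apply (op_sub A B) f $$ k = (op_apply A f - op_apply B f) $$ k"
      by (simp add: apply_nth[OF A f M] apply_nth[OF B f M] op_sub_def
          left_diff_distrib sum_subtractf)
  qed
qed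

lemma apply_finite:
  assumes "\<And>m. m > N \<Longrightarrow> (zderiv^^m) f = 0"
  shows "op_apply A f = (\<Sum>m\<le>N. A m * (zderiv^^m) f)"
  unfolding op_apply_def by (rule fsum_finite) (use assms in auto)

lemma apply_one: "op_apply op_one f = f"
proof -
  have "op_apply op_one f = (\<Sum>m\<in>{0}. op_one m * (zderiv^^m) f)"
    unfolding op_apply_def by (rule fsum_finite) (auto simp: op_one_def)
  then show ?thesis by (simp add: op_one_def)
qed

lemma bnd_one: "bnd op_one 0"
  unfolding bnd_def op_one_def vge_def by simp

lemma dc_zero: "1 \<le> k \<Longrightarrow> k \<le> int m \<Longrightarrow> dc m k = 0"
proof (induction m arbitrary: k)
  case 0 then show ?case by simp
next
  case (Suc m)
  show ?case
  proof (cases "k = 1")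
    case True then show ?thesis by simp
  next
    case False
    then have "dc m (k-1) = 0" using Suc by (intro Suc.IH) auto
    then show ?thesis by simp
  qed
qed

lemma dc_nz: "k \<le> 0 \<Longrightarrow> dc m k \<noteq> 0"
  by (induction m arbitrary: k) auto

lemma zpow_zH_nth: "(zderiv^^m) (zH^n) $$ k = (if k = int m - int n then dc m k else 0)"
  unfolding zH_def by (auto simp: zpow_nth)

lemma zpow_zH_big: "m > n \<Longrightarrow> (zderiv^^m) (zH^n) = 0"
  by (rule fls_eqI) (auto simp: zpow_zH_nth intro!: dc_zero)

lemma zpow_zH_eq: "(zderiv^^n) (zH^n) = fls_const (dc n 0)"
  by (rule fls_eqI) (auto simp: zpow_zH_nth)

lemma apply_zH: "op_apply A (zH^n) = (\<Sum>m\<le>n. A m * (zderiv^^m) (zH^n))"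
  by (rule apply_finite) (simp add: zpow_zH_big)

lemma apply_zH': "op_apply A (zH^n) = (\<Sum>m<n. A m * (zderiv^^m) (zH^n)) + A n * fls_const (dc n 0)"
  unfolding apply_zH by (simp add: lessThan_Suc_atMost[symmetric] zpow_zH_eq)

lemma faithful:
  assumes "\<And>j. op_apply A (zH^j) = op_apply B (zH^j)"
  shows "A = B"
proof
  fix j show "A j = B j"
  proof (induction j rule: less_induct)
    case (less j)
    have "(\<Sum>m<j. A m * (zderiv^^m) (zH^j)) = (\<Sum>m<j. B m * (zderiv^^m) (zH^j))"
      using less by simp
    then have "A j * fls_const (dc j 0) = B j * fls_const (dc j 0)"
      using assms[of j] unfolding apply_zH' by simp
    moreover have "fls_const (dc j 0) \<noteq> (0::H)" using dc_nz[of 0 j] by simp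
    ultimately show "A j = B j" by simp
  qed
qed

lemma Hminus_vge: "f \<in> Hminus \<longleftrightarrow> vge f 1"
  unfolding Hminus_def vge_def by auto

lemma piplus_nth: "piplus f $$ k = (if k \<le> 0 then f $$ k else 0)"
  unfolding piplus_def
  by (rule nth_Abs_fls_lower_bound[of "fls_subdegree f"]) auto

lemma piplus_diff: "piplus (f - g) = piplus f - piplus g"
  by (rule fls_eqI) (simp add: piplus_nth)

lemma piplus_Hplus: "piplus f \<in> Hplus"
  unfolding Hplus_def by (simp add: piplus_nth)

lemma piplus_zero_iff: "piplus f = 0 \<longleftrightarrow> f \<in> Hminus"
  unfolding Hminus_def fls_eq_iff by (auto simp: piplus_nth split: if_splits)

lemma piplus_id: "f \<in> Hplus \<Longrightarrow> piplus f = f"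
  unfolding Hplus_def by (intro fls_eqI) (auto simp: piplus_nth)

lemma one_Hplus: "(1::H) \<in> Hplus"
  unfolding Hplus_def by simp

lemma zH_pow_nth: "(zH^n) $$ k = (if k = - int n then 1 else 0)"
  unfolding zH_def by simp

lemma zH_Hplus: "zH^n \<in> Hplus"
  unfolding Hplus_def by (simp add: zH_pow_nth)

lemma vge_zH: "vge (zH^n) (- int n)"
  unfolding vge_def by (simp add: zH_pow_nth)

lemma Hplus_add: "f \<in> Hplus \<Longrightarrow> g \<in> Hplus \<Longrightarrow> f + g \<in> Hplus"
  unfolding Hplus_def by auto
lemma Hplus_scal: "f \<in> Hplus \<Longrightarrow> fls_const c * f \<in> Hplus"
  unfolding Hplus_def by auto
lemma Hplus_0: "(0::H) \<in> Hplus"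
  unfolding Hplus_def by auto

lemma Hminus_diff: "f \<in> Hminus \<Longrightarrow> g \<in> Hminus \<Longrightarrow> f - g \<in> Hminus"
  unfolding Hminus_def by auto
lemma Hminus_scal: "f \<in> Hminus \<Longrightarrow> fls_const c * f \<in> Hminus"
  unfolding Hminus_def by auto

locale grW =
  fixes W :: "H set"
  assumes W: "W \<in> Gr0plus"
begin

lemma W0: "0 \<in> W" and Wadd: "x \<in> W \<Longrightarrow> y \<in> W \<Longrightarrow> x + y \<in> W"
  and Wscal: "x \<in> W \<Longrightarrow> fls_const c * x \<in> W" and Wbij: "bij_betw piplus W Hplus"
  using W unfolding Gr0plus_def by auto

lemma Wdiff: "x \<in> W \<Longrightarrow> y \<in> W \<Longrightarrow> x - y \<in> W"
proof -
  assume x: "x \<in> W" and y: "y \<in> W"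
  have "fls_const (-1) * y \<in> W" by (rule Wscal[OF y])
  moreover have "fls_const (-1) * y = - y"
    by (rule fls_eqI) simp
  ultimately show ?thesis using Wadd[OF x] by (metis diff_conv_add_uminus)
qed

lemma Wsum: "(\<And>i. i \<in> S \<Longrightarrow> F i \<in> W) \<Longrightarrow> sum F S \<in> W"
  by (induction S rule: infinite_finite_induct) (auto intro: W0 Wadd)

lemma W_Hminus: "w \<in> W \<Longrightarrow> w \<in> Hminus \<Longrightarrow> w = 0"
proof -
  assume w: "w \<in> W" "w \<in> Hminus"
  have "piplus w = piplus 0" using w(2) piplus_zero_iff[of w] piplus_zero_iff[of 0]
    by (simp add: Hminus_def)
  then show "w = 0" using Wbij w(1) W0 unfolding bij_betw_def inj_on_def by blast
qed

lemma W_eq: "x \<in> W \<Longrightarrow> y \<in> W \<Longrightarrow> x - y \<in> Hminus \<Longrightarrow> x = y"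
  using W_Hminus[of "x - y"] Wdiff by auto

definition wof :: "H \<Rightarrow> H" where "wof p = inv_into W piplus p"

lemma wof: "p \<in> Hplus \<Longrightarrow> wof p \<in> W \<and> piplus (wof p) = p"
  unfolding wof_def using Wbij
  by (metis bij_betw_imp_surj_on bij_betw_inv_into_right inv_into_into)

definition Sn :: "H list \<Rightarrow> nat \<Rightarrow> H" where
  "Sn L n = (\<Sum>m<n. L ! m * (zderiv^^m) (zH^n))"

definition gnext :: "H list \<Rightarrow> nat \<Rightarrow> H" where
  "gnext L n = fls_const (1 / dc n 0) * (wof (piplus (Sn L n)) - Sn L n)"

fun Gs :: "nat \<Rightarrow> H list" where
  "Gs 0 = [wof 1]"
| "Gs (Suc n) = Gs n @ [gnext (Gs n) (Suc n)]"

definition Gc :: DOp where "Gc n = Gs n ! n"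

lemma Gs_len: "length (Gs n) = Suc n"
  by (induction n) auto

lemma Gs_nth: "m \<le> n \<Longrightarrow> Gs n ! m = Gc m"
proof (induction n)
  case 0 then show ?case by (simp add: Gc_def)
next
  case (Suc n)
  show ?case
  proof (cases "m = Suc n")
    case True then show ?thesis by (simp add: Gc_def)
  next
    case False
    then have "m \<le> n" using Suc by simp
    then show ?thesis using Suc Gs_len[of n] by (simp add: nth_append)
  qed
qed

lemma Gc_0: "Gc 0 = wof 1" by (simp add: Gc_def)

lemma Gc_Suc: "Gc (Suc n) = fls_const (1 / dc (Suc n) 0) *
   (wof (piplus (\<Sum>m<Suc n. Gc m * (zderiv^^m) (zH^Suc n))) - (\<Sum>m<Suc n. Gc m * (zderiv^^m) (zH^Suc n)))"
proof -
  have "Sn (Gs n) (Suc n) = (\<Sum>m<Suc n. Gc m * (zderiv^^m) (zH^Suc n))"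
    unfolding Sn_def by (intro sum.cong refl) (simp add: Gs_nth)
  moreover have "Gc (Suc n) = gnext (Gs n) (Suc n)"
    unfolding Gc_def using Gs_len[of n] by (simp add: nth_append)
  ultimately show ?thesis unfolding gnext_def by simp
qed

lemma Gc_z: "op_apply Gc (zH^n) \<in> W"
proof (cases n)
  case 0
  then show ?thesis unfolding apply_zH' by (simp add: Gc_0 wof[OF one_Hplus])
next
  case (Suc n')
  define S where "S = (\<Sum>m<n. Gc m * (zderiv^^m) (zH^n))"
  have d: "dc n 0 \<noteq> 0" by (rule dc_nz) simp
  have ce: "fls_const (1 / dc n 0) * fls_const (dc n 0) = (1::H)"
    using d by (intro fls_eqI) simp
  have gn: "Gc n = fls_const (1 / dc n 0) * (wof (piplus S) - S)"
    unfolding Suc S_def by (rule Gc_Suc)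
  have "Gc n * fls_const (dc n 0) = (wof (piplus S) - S) * (fls_const (1 / dc n 0) * fls_const (dc n 0))"
    unfolding gn by (metis mult.commute mult.assoc)
  then have "Gc n * fls_const (dc n 0) = wof (piplus S) - S"
    unfolding ce by simp
  then have "op_apply Gc (zH^n) = wof (piplus S)"
    unfolding apply_zH' S_def by simp
  then show ?thesis using wof[OF piplus_Hplus] by simp
qed

lemma Gc_Dminus: "op_sub Gc op_one \<in> Dminus"
  unfolding Dminus_def
proof (intro CollectI allI)
  fix m
  show "op_sub Gc op_one m \<in> Hminus"
  proof (cases m)
    case 0
    have "piplus (wof 1 - 1) = 0"
      using wof[OF one_Hplus] piplus_id[OF one_Hplus] by (simp add: piplus_diff)
    then show ?thesis unfolding 0 op_sub_def op_one_def Gc_0 by (simp add: piplus_zero_iff)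
  next
    case (Suc n)
    define S where "S = (\<Sum>m<Suc n. Gc m * (zderiv^^m) (zH^Suc n))"
    have "piplus (wof (piplus S) - S) = 0"
      using wof[OF piplus_Hplus[of S]] by (simp add: piplus_diff)
    then have "wof (piplus S) - S \<in> Hminus" by (simp add: piplus_zero_iff)
    then show ?thesis unfolding Suc op_sub_def op_one_def Gc_Suc S_def[symmetric]
      by (simp add: Hminus_scal)
  qed
qed

end

lemma Dminus_bnd:
  assumes "op_sub G op_one \<in> Dminus"
  shows "bnd (op_sub G op_one) 1" "bnd G 0"
proof -
  show b1: "bnd (op_sub G op_one) 1" using assms unfolding Dminus_def bnd_def Hminus_vge by auto
  have "G m = op_sub G op_one m + op_one m" for m by (simp add: op_sub_def)
  moreover have "vge (op_sub G op_one m + op_one m) 0" for m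
    using b1 bnd_one unfolding bnd_def by (intro vge_add) (auto intro: vge_mono)
  ultimately show "bnd G 0" unfolding bnd_def by metis
qed

lemma apply_zero: "op_apply A 0 = 0"
proof -
  have "op_apply A 0 = (\<Sum>m\<le>0. A m * (zderiv^^m) 0)"
    by (rule apply_finite) (simp add: zpow_lin)
  then show ?thesis by (simp add: zpow_lin)
qed

lemma apply_sum:
  assumes A: "bnd A a" and F: "\<And>i. i \<in> S \<Longrightarrow> vge (F i) c"
  shows "op_apply A (sum F S) = (\<Sum>i\<in>S. op_apply A (F i))"
  using F
proof (induction S rule: infinite_finite_induct)
  case (infinite S) then show ?case by (simp add: apply_zero)
next
  case empty then show ?case by (simp add: apply_zero)
next
  case (insert x S)
  have "vge (sum F S) c" using insert by (intro vge_sum) auto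
  then show ?case using insert apply_lin(1)[OF A, of "F x" c "sum F S"] by simp
qed

lemma poly_expand:
  assumes "p \<in> Hplus" "vge p (- int N)"
  shows "p = (\<Sum>n\<le>N. fls_const (p $$ (- int n)) * zH^n)"
proof (rule fls_eqI)
  fix k
  have "(\<Sum>n\<le>N. fls_const (p $$ (- int n)) * zH^n) $$ k
      = (\<Sum>n\<le>N. if n = nat (-k) then (if k \<le> 0 then p $$ k else 0) else 0)"
    unfolding fls_nth_sum by (intro sum.cong refl) (auto simp: zH_pow_nth)
  also have "\<dots> = p $$ k"
    using assms unfolding Hplus_def vge_def by (auto simp: not_le)
  finally show "p $$ k = (\<Sum>n\<le>N. fls_const (p $$ (- int n)) * zH^n) $$ k" by simp
qed

lemma vge_all: "\<exists>c. vge f c"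
  using vge_subdegree by blast

context grW
begin

lemma Gc_bnd: "bnd Gc 0" "bnd (op_sub Gc op_one) 1"
  using Dminus_bnd[OF Gc_Dminus] by auto

lemma Gc_apply_Hplus:
  assumes p: "p \<in> Hplus"
  shows "op_apply Gc p \<in> W"
proof -
  define N where "N = nat (- fls_subdegree p)"
  have vp: "vge p (- int N)" unfolding N_def by (rule vge_mono[OF vge_subdegree]) simp
  have vz: "vge (fls_const (p $$ (- int n)) * zH^n) (- int N)" if "n \<le> N" for n
  proof -
    have "vge (fls_const (p $$ (- int n)) * zH^n) (0 + - int n)" by (intro vge_mult vge_const vge_zH)
    then show ?thesis by (rule vge_mono) (use that in simp)
  qed
  have "op_apply Gc p = (\<Sum>n\<le>N. op_apply Gc (fls_const (p $$ (- int n)) * zH^n))"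
    by (subst poly_expand[OF p vp]) (rule apply_sum[OF Gc_bnd(1)], use vz in simp)
  also have "\<dots> = (\<Sum>n\<le>N. fls_const (p $$ (- int n)) * op_apply Gc (zH^n))"
    by (intro sum.cong refl apply_lin(3)[OF Gc_bnd(1) vge_zH vge_zH])
  finally show ?thesis by (simp only:) (intro Wsum Wscal Gc_z)
qed

lemma Gz_props:
  "vge (op_apply Gc (zH^n) - zH^n) (1 - int n)"
  "vge (op_apply Gc (zH^n)) (- int n)"
  "op_apply Gc (zH^n) $$ (- int n) = 1"
proof -
  have "op_apply (op_sub Gc op_one) (zH^n) = op_apply Gc (zH^n) - zH^n"
    using apply_sub_op[OF Gc_bnd(1) bnd_one vge_zH] by (simp add: apply_one)
  moreover have "vge (op_apply (op_sub Gc op_one) (zH^n)) (1 + - int n)"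
    by (rule apply_vge[OF Gc_bnd(2) vge_zH])
  ultimately show v1: "vge (op_apply Gc (zH^n) - zH^n) (1 - int n)" by simp
  show "vge (op_apply Gc (zH^n)) (- int n)"
    using apply_vge[OF Gc_bnd(1) vge_zH] by simp
  have "(op_apply Gc (zH^n) - zH^n) $$ (- int n) = 0" using v1 unfolding vge_def by simp
  then show "op_apply Gc (zH^n) $$ (- int n) = 1" by (simp add: zH_pow_nth)
qed

lemma Gc_surj_aux: "\<forall>w\<in>W. vge w (1 - int N) \<longrightarrow> (\<exists>p\<in>Hplus. op_apply Gc p = w)"
proof (induction N)
  case 0
  show ?case
  proof (intro ballI impI)
    fix w assume "w \<in> W" "vge w (1 - int 0)"
    then have "w = 0" using W_Hminus Hminus_vge by simp
    then show "\<exists>p\<in>Hplus. op_apply Gc p = w" using Hplus_0 apply_zero by metis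
  qed
next
  case (Suc N)
  show ?case
  proof (intro ballI impI)
    fix w assume w: "w \<in> W" "vge w (1 - int (Suc N))"
    define a where "a = w $$ (- int N)"
    define gz where "gz = op_apply Gc (zH^N)"
    define w' where "w' = w - fls_const a * gz"
    have w'W: "w' \<in> W" unfolding w'_def gz_def using w(1) Gc_z by (intro Wdiff Wscal)
    have "vge w' (1 - int N)" unfolding vge_def
    proof (intro allI impI)
      fix k assume k: "k < 1 - int N"
      show "w' $$ k = 0"
      proof (cases "k = - int N")
        case True
        then show ?thesis using Gz_props(3)[of N] unfolding w'_def a_def gz_def by simp
      next
        case False
        then have "k < - int N" using k by simp
        then show ?thesis using w(2) Gz_props(2)[of N] unfolding w'_def gz_def vge_def by simp
      qed
    qed
    then obtain p' where p': "p' \<in> Hplus" "op_apply Gc p' = w'" using Suc w'W by blast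
    define c where "c = min (fls_subdegree p') (- int N)"
    have c1: "vge p' c" unfolding c_def by (rule vge_mono[OF vge_subdegree]) simp
    have c2: "vge (fls_const a * zH^N) c" unfolding c_def
      using vge_mult[OF vge_const vge_zH, of a N] by (rule vge_mono) simp
    have "op_apply Gc (p' + fls_const a * zH^N) = w' + fls_const a * gz"
      unfolding apply_lin(1)[OF Gc_bnd(1) c1 c2] p'(2) gz_def
      using apply_lin(3)[OF Gc_bnd(1) vge_zH vge_zH] by simp
    also have "\<dots> = w" unfolding w'_def by simp
    finally show "\<exists>p\<in>Hplus. op_apply Gc p = w"
      using p'(1) by (intro bexI[of _ "p' + fls_const a * zH^N"] Hplus_add Hplus_scal zH_Hplus) auto
  qed
qed

lemma Gc_image: "W = op_apply Gc ` Hplus"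
proof
  show "op_apply Gc ` Hplus \<subseteq> W" using Gc_apply_Hplus by auto
  show "W \<subseteq> op_apply Gc ` Hplus"
  proof
    fix w assume w: "w \<in> W"
    define N where "N = nat (1 - fls_subdegree w)"
    have "vge w (1 - int N)" unfolding N_def by (rule vge_mono[OF vge_subdegree]) simp
    then show "w \<in> op_apply Gc ` Hplus" using Gc_surj_aux[of N] w by auto
  qed
qed

lemma G_unique:
  assumes G': "op_sub G' op_one \<in> Dminus" and GW: "\<And>n. op_apply G' (zH^n) \<in> W"
  shows "G' = Gc"
proof
  fix j show "G' j = Gc j"
  proof (induction j rule: less_induct)
    case (less j)
    define d where "d = op_apply G' (zH^j) - op_apply Gc (zH^j)"
    have dW: "d \<in> W" unfolding d_def using GW Gc_z by (intro Wdiff)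
    have "(\<Sum>m<j. G' m * (zderiv^^m) (zH^j)) = (\<Sum>m<j. Gc m * (zderiv^^m) (zH^j))"
      using less by simp
    then have dd: "d = (G' j - Gc j) * fls_const (dc j 0)"
      unfolding d_def apply_zH' by (simp add: algebra_simps)
    have "G' j - Gc j = op_sub G' op_one j - op_sub Gc op_one j" by (simp add: op_sub_def)
    then have "G' j - Gc j \<in> Hminus"
      using G' Gc_Dminus unfolding Dminus_def by (auto intro: Hminus_diff)
    then have "d \<in> Hminus" unfolding dd by (simp add: mult.commute Hminus_scal)
    then have "d = 0" using W_Hminus dW by simp
    moreover have "fls_const (dc j 0) \<noteq> (0::H)" using dc_nz[of 0 j] by simp
    ultimately show "G' j = Gc j" unfolding dd by simp
  qed
qed

lemma satoG_eq: "satoG W = Gc"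
  unfolding satoG_def
proof (rule the_equality)
  show "op_sub Gc op_one \<in> Dminus \<and> W = op_apply Gc ` Hplus" using Gc_Dminus Gc_image by simp
  fix G' assume "op_sub G' op_one \<in> Dminus \<and> W = op_apply G' ` Hplus"
  then show "G' = Gc" using G_unique zH_Hplus by blast
qed

lemma wavePsi_eq: "wavePsi W = Gc 0"
  unfolding wavePsi_def
proof (rule the_equality)
  have "op_sub Gc op_one 0 \<in> Hminus" using Gc_Dminus unfolding Dminus_def by simp
  then have g0: "Gc 0 - 1 \<in> Hminus" by (simp add: op_sub_def op_one_def)
  show "Gc 0 \<in> W \<and> Gc 0 - 1 \<in> Hminus" using g0 wof[OF one_Hplus] Gc_0 by simp
  fix psi assume psi: "psi \<in> W \<and> psi - 1 \<in> Hminus"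
  have "psi - Gc 0 = (psi - 1) - (Gc 0 - 1)" by simp
  then have "psi - Gc 0 \<in> Hminus" using psi g0 Hminus_diff by metis
  then show "psi = Gc 0" using W_eq psi wof[OF one_Hplus] Gc_0 by simp
qed

end

lemma vge_uminus: "vge f c \<Longrightarrow> vge (- f) c"
  unfolding vge_def by simp

lemma fsum_reindex: "inj_on h J \<Longrightarrow> fsum F (h ` J) = fsum (F \<circ> h) J"
proof -
  assume inj: "inj_on h J"
  have "(\<Sum>i\<in>{i\<in>h ` J. F i $$ k \<noteq> 0}. F i $$ k) = (\<Sum>j\<in>{j\<in>J. F (h j) $$ k \<noteq> 0}. F (h j) $$ k)" for k
  proof -
    have e: "{i\<in>h ` J. F i $$ k \<noteq> 0} = h ` {j\<in>J. F (h j) $$ k \<noteq> 0}" by auto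
    have "inj_on h {j\<in>J. F (h j) $$ k \<noteq> 0}" using inj by (rule inj_on_subset) auto
    then show ?thesis unfolding e by (simp add: sum.reindex)
  qed
  then show ?thesis unfolding fsum_def by simp
qed

lemma fsummable_subset: "fsummable F I \<Longrightarrow> J \<subseteq> I \<Longrightarrow> fsummable F J"
proof -
  assume a: "fsummable F I" "J \<subseteq> I"
  obtain N where N: "\<forall>i\<in>I. \<forall>k<N. F i $$ k = 0" using a(1) unfolding fsummable_def by blast
  have "finite {i\<in>J. F i $$ k \<noteq> 0}" for k
  proof (rule finite_subset)
    show "{i\<in>J. F i $$ k \<noteq> 0} \<subseteq> {i\<in>I. F i $$ k \<noteq> 0}" using a(2) by blast
    show "finite {i\<in>I. F i $$ k \<noteq> 0}" using a(1) unfolding fsummable_def by blast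
  qed
  moreover have "\<forall>i\<in>J. \<forall>k<N. F i $$ k = 0" using N a(2) by blast
  ultimately show ?thesis unfolding fsummable_def by blast
qed

lemma fsum_split:
  assumes "fsummable F I" "J \<subseteq> I"
  shows "fsum F I = fsum F J + fsum F (I - J)"
proof (rule fls_eqI)
  fix k
  have s1: "fsummable F J" "fsummable F (I - J)"
    using fsummable_subset[OF assms(1) assms(2)] fsummable_subset[OF assms(1) Diff_subset] by auto
  have fin: "finite {i\<in>I. F i $$ k \<noteq> 0}" using assms(1) unfolding fsummable_def by auto
  have "fsum F I $$ k = (\<Sum>i\<in>{i\<in>I. F i $$ k \<noteq> 0}. F i $$ k)" by (rule fsum_nth[OF assms(1)])
  also have "\<dots> = (\<Sum>i\<in>{i\<in>J. F i $$ k \<noteq> 0}. F i $$ k) + (\<Sum>i\<in>{i\<in>I - J. F i $$ k \<noteq> 0}. F i $$ k)"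
  proof -
    have "{i\<in>I. F i $$ k \<noteq> 0} = {i\<in>J. F i $$ k \<noteq> 0} \<union> {i\<in>I - J. F i $$ k \<noteq> 0}" using assms(2) by auto
    moreover have "finite {i\<in>J. F i $$ k \<noteq> 0}"
      by (rule finite_subset[OF _ fin]) (use assms(2) in blast)
    moreover have "finite {i\<in>I - J. F i $$ k \<noteq> 0}"
      by (rule finite_subset[OF _ fin]) blast
    moreover have "{i\<in>J. F i $$ k \<noteq> 0} \<inter> {i\<in>I - J. F i $$ k \<noteq> 0} = {}" by blast
    ultimately show ?thesis by (simp only:) (rule sum.union_disjoint)
  qed
  also have "\<dots> = (fsum F J + fsum F (I - J)) $$ k" by (simp add: fsum_nth[OF s1(1)] fsum_nth[OF s1(2)])
  finally show "fsum F I $$ k = (fsum F J + fsum F (I - J)) $$ k" .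
qed

lemma fsum_empty: "fsum F {} = 0"
  using fsum_finite[of "{}" "{}" F] by simp

lemma common_vge: "\<exists>c. vge f c \<and> vge g c"
  by (metis min.cobounded1 min.cobounded2 vge_mono vge_subdegree)

locale sato1 =
  fixes G :: DOp
  assumes GD: "op_sub G op_one \<in> Dminus"
begin

abbreviation "T \<equiv> op_sub G op_one"

lemma bT: "bnd T 1" and bG: "bnd G 0"
  using Dminus_bnd[OF GD] by auto

lemma apply_G: "vge f c \<Longrightarrow> op_apply G f = f + op_apply T f"
  using apply_sub_op[OF bG bnd_one, of f c] by (simp add: apply_one)

lemma G_inj:
  assumes "op_apply G f = op_apply G g"
  shows "f = g"
proof (rule ccontr)
  assume ne: "f \<noteq> g"
  obtain c where c: "vge f c" "vge g c" using common_vge by blast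
  define d where "d = f - g"
  have vd: "vge d c" unfolding d_def using c by (rule vge_diff)
  have "op_apply G d = 0" unfolding d_def using apply_lin(2)[OF bG c] assms by simp
  then have e: "d + op_apply T d = 0" using apply_G[OF vd] by simp
  define s where "s = fls_subdegree d"
  have dnz: "d \<noteq> 0" using ne unfolding d_def by simp
  have "vge (op_apply T d) (1 + s)" unfolding s_def by (rule apply_vge[OF bT vge_subdegree])
  then have "op_apply T d $$ s = 0" unfolding vge_def by simp
  then have "(d + op_apply T d) $$ s \<noteq> 0" using dnz unfolding s_def by simp
  then show False using e by simp
qed

definition nst :: "H \<Rightarrow> nat \<Rightarrow> H" where "nst h j = ((\<lambda>g. - op_apply T g)^^j) h"

lemma nst_Suc: "nst h (Suc j) = - op_apply T (nst h j)"
  unfolding nst_def by simp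

lemma nst_vge: "vge h c \<Longrightarrow> vge (nst h j) (c + int j)"
proof (induction j)
  case 0 then show ?case by (simp add: nst_def)
next
  case (Suc j)
  have "vge (op_apply T (nst h j)) (1 + (c + int j))" by (rule apply_vge[OF bT Suc.IH[OF Suc.prems]])
  then show ?case unfolding nst_Suc by (intro vge_uminus) (simp add: add_ac)
qed

definition Ginv :: "H \<Rightarrow> H" where "Ginv h = fsum (nst h) UNIV"

lemma nst_summable: "vge h c \<Longrightarrow> fsummable (nst h) UNIV"
proof (rule fsummableI)
  assume h: "vge h c"
  fix j show "vge (nst h j) c" using nst_vge[OF h, of j] by (rule vge_mono) simp
next
  assume h: "vge h c"
  fix k
  have "nst h j $$ k = 0" if "j \<notin> {..nat (k - c)}" for j
  proof -
    have "k < c + int j" using that by auto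
    then show ?thesis using nst_vge[OF h, of j] unfolding vge_def by blast
  qed
  then show "\<exists>S. finite S \<and> (\<forall>i\<in>UNIV. i \<notin> S \<longrightarrow> nst h i $$ k = 0)"
    by (intro exI[of _ "{..nat (k - c)}"]) blast
qed

lemma Ginv_nth:
  assumes h: "vge h c" and J: "k - c \<le> int J"
  shows "Ginv h $$ k = (\<Sum>j\<le>J. nst h j) $$ k"
proof -
  have "Ginv h $$ k = (\<Sum>j\<le>J. nst h j $$ k)" unfolding Ginv_def
  proof (rule fsum_nth_sub[OF nst_summable[OF h]])
    fix j assume "j \<notin> {..J}"
    then have "k < c + int j" using J by auto
    then show "nst h j $$ k = 0" using nst_vge[OF h, of j] unfolding vge_def by blast
  qed auto
  then show ?thesis by (simp add: fls_nth_sum)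
qed

lemma nst_vge0: assumes "vge h c" shows "vge (nst h j) c"
  using nst_vge[OF assms, of j] by (rule vge_mono) simp

lemma Ginv_vge: "vge h c \<Longrightarrow> vge (Ginv h) c"
  unfolding Ginv_def
proof (rule vge_fsum[OF nst_summable])
  assume h: "vge h c"
  fix j show "vge (nst h j) c" using nst_vge[OF h, of j] by (rule vge_mono) simp
qed

lemma Ginv_right:
  assumes h: "vge h c"
  shows "op_apply G (Ginv h) = h"
proof (rule fls_eqI)
  fix k
  define J where "J = nat (k - c)"
  define P where "P = (\<Sum>j\<le>J. nst h j)"
  have vP: "vge P c" unfolding P_def
    by (intro vge_sum nst_vge0[OF h])
  have vGi: "vge (Ginv h) c" by (rule Ginv_vge[OF h])
  have "vge (Ginv h - P) (c + int J + 1)" unfolding vge_def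
  proof (intro allI impI)
    fix i assume "i < c + int J + 1"
    then have "i - c \<le> int J" by simp
    then show "(Ginv h - P) $$ i = 0" unfolding P_def by (simp add: Ginv_nth[OF h])
  qed
  then have "vge (op_apply T (Ginv h - P)) (1 + (c + int J + 1))" by (rule apply_vge[OF bT])
  then have "op_apply T (Ginv h - P) $$ k = 0" unfolding vge_def J_def by simp
  then have t1: "op_apply T (Ginv h) $$ k = op_apply T P $$ k"
    using apply_lin(2)[OF bT vGi vP] by simp
  have "op_apply T P = (\<Sum>j\<le>J. op_apply T (nst h j))"
    unfolding P_def by (rule apply_sum[OF bT nst_vge0[OF h]])
  also have "\<dots> = (\<Sum>j\<le>J. - nst h (Suc j))" by (simp add: nst_Suc)
  finally have t2: "op_apply T P = - (\<Sum>j\<le>J. nst h (Suc j))" by (simp add: sum_negf)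
  have "op_apply G (Ginv h) $$ k = Ginv h $$ k + op_apply T (Ginv h) $$ k"
    by (simp add: apply_G[OF vGi])
  also have "\<dots> = (\<Sum>j\<le>J. nst h j - nst h (Suc j)) $$ k"
  proof -
    have gn: "Ginv h $$ k = P $$ k" using Ginv_nth[OF h, of k J] unfolding P_def J_def by simp
    show ?thesis unfolding t1 t2 gn unfolding P_def by (simp add: sum_subtractf)
  qed
  also have "\<dots> = (nst h 0 - nst h (Suc J)) $$ k" by (simp only: sum_telescope)
  also have "\<dots> = h $$ k"
  proof -
    have "nst h (Suc J) $$ k = 0" using nst_vge[OF h, of "Suc J"] unfolding vge_def J_def by simp
    then show ?thesis by (simp add: nst_def)
  qed
  finally show "op_apply G (Ginv h) $$ k = h $$ k" .
qed

definition Rp :: "DOp \<Rightarrow> nat \<Rightarrow> H" where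
  "Rp X p = fsum (mt G X) {t\<in>Tset p. fst (snd t) < p}"

lemma Rp_cong: "(\<And>n. n < p \<Longrightarrow> X n = Y n) \<Longrightarrow> Rp X p = Rp Y p"
  unfolding Rp_def by (rule fsum_cong) (auto simp: mt_def)

lemma mult_split:
  assumes X: "bnd X b"
  shows "op_mult G X p = op_apply G (X p) + Rp X p"
proof -
  have "op_mult G X p = fsum (mt G X) {t\<in>Tset p. fst (snd t) < p} + fsum (mt G X) (Tset p - {t\<in>Tset p. fst (snd t) < p})"
    unfolding op_mult_eq by (rule fsum_split[OF mult_summable[OF bG X]]) auto
  moreover have "Tset p - {t\<in>Tset p. fst (snd t) < p} = (\<lambda>m. (m, p, m)) ` UNIV"
    unfolding Tset_def by auto
  moreover have "fsum (mt G X) ((\<lambda>m. (m, p, m)) ` UNIV) = op_apply G (X p)"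
    by (subst fsum_reindex) (auto simp: inj_on_def op_apply_def mt_def o_def)
  ultimately show ?thesis unfolding Rp_def by simp
qed

fun Xs :: "nat \<Rightarrow> H list" where
  "Xs 0 = [Ginv 1]"
| "Xs (Suc p) = Xs p @ [Ginv (- Rp (\<lambda>n. Xs p ! n) (Suc p))]"

definition Xc :: DOp where "Xc p = Xs p ! p"

lemma Xs_len: "length (Xs n) = Suc n"
  by (induction n) auto

lemma Xs_nth: "m \<le> n \<Longrightarrow> Xs n ! m = Xc m"
proof (induction n)
  case 0 then show ?case by (simp add: Xc_def)
next
  case (Suc n)
  show ?case
  proof (cases "m = Suc n")
    case True then show ?thesis by (simp add: Xc_def)
  next
    case False
    then have "m \<le> n" using Suc by simp
    then show ?thesis using Suc Xs_len[of n] by (simp add: nth_append)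
  qed
qed

lemma Xc_0: "Xc 0 = Ginv 1" by (simp add: Xc_def)

lemma Xc_Suc: "Xc (Suc p) = Ginv (- Rp Xc (Suc p))"
proof -
  have "Rp (\<lambda>n. Xs p ! n) (Suc p) = Rp Xc (Suc p)" by (rule Rp_cong) (simp add: Xs_nth)
  then show ?thesis unfolding Xc_def using Xs_len[of p] by (simp add: nth_append)
qed

lemma vge_one: "vge (1::H) 0" unfolding vge_def by simp

lemma Rp_vge:
  assumes "\<And>n. n < p \<Longrightarrow> vge (Xc n) 0"
  shows "vge (Rp Xc p) 1"
proof -
  define Y where "Y n = (if n < p then Xc n else 0)" for n
  have Y: "bnd Y 0" unfolding bnd_def Y_def using assms by auto
  have "Rp Xc p = Rp Y p" by (rule Rp_cong) (simp add: Y_def)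
  also have "vge (Rp Y p) 1" unfolding Rp_def
  proof (rule vge_fsum)
    show "fsummable (mt G Y) {t\<in>Tset p. fst (snd t) < p}"
      by (rule fsummable_subset[OF mult_summable[OF bG Y]]) auto
    fix t assume t: "t \<in> {t\<in>Tset p. fst (snd t) < p}"
    obtain m n i where tt: "t = (m, n, i)" by (cases t)
    have mi: "i \<le> m" "m + n = p + i" "n < p" using t unfolding tt Tset_def by auto
    then have "m \<noteq> 0" by simp
    moreover have "vge (G m - (if m = 0 then 1 else 0)) 1"
      using GD unfolding Dminus_def op_sub_def op_one_def Hminus_vge by auto
    ultimately have "vge (G m) 1" by simp
    then have "vge (of_nat (m choose i) * G m) (0 + 1)" by (intro vge_mult vge_of_nat)
    moreover have "vge ((zderiv^^i) (Y n)) (0 + int i)" using Y unfolding bnd_def by (intro vge_zpow) auto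
    ultimately have "vge (of_nat (m choose i) * G m * (zderiv^^i) (Y n)) (0 + 1 + (0 + int i))"
      by (rule vge_mult)
    moreover have "mt G Y t = of_nat (m choose i) * G m * (zderiv^^i) (Y n)" unfolding tt mt_def by simp
    ultimately show "vge (mt G Y t) 1" using vge_mono by fastforce
  qed
  finally show ?thesis .
qed

lemma Xc_vge: "vge (Xc p) (if p = 0 then 0 else 1)"
proof (induction p rule: less_induct)
  case (less p)
  show ?case
  proof (cases p)
    case 0 then show ?thesis using Ginv_vge[OF vge_one] by (simp add: Xc_0)
  next
    case (Suc p')
    have "vge (Rp Xc p) 1"
    proof (rule Rp_vge)
      fix n assume "n < p"
      then have "vge (Xc n) (if n = 0 then 0 else 1)" using less by blast
      then show "vge (Xc n) 0" by (rule vge_mono) simp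
    qed
    then have "vge (Ginv (- Rp Xc p)) 1" by (intro Ginv_vge vge_uminus)
    then show ?thesis unfolding Suc Xc_Suc by simp
  qed
qed

lemma Xc_bnd: "bnd Xc 0"
  unfolding bnd_def
proof
  fix p show "vge (Xc p) 0" using Xc_vge[of p] by (rule vge_mono) simp
qed

lemma Xc_Dminus: "op_sub Xc op_one \<in> Dminus"
  unfolding Dminus_def
proof (intro CollectI allI)
  fix p show "op_sub Xc op_one p \<in> Hminus"
  proof (cases p)
    case 0
    have v: "vge (Xc 0) 0" using Xc_vge[of 0] by simp
    have "Xc 0 + op_apply T (Xc 0) = 1" using Ginv_right[OF vge_one] apply_G[OF v] by (simp add: Xc_0)
    then have "Xc 0 - 1 = - op_apply T (Xc 0)" by (simp add: algebra_simps)
    moreover have "vge (op_apply T (Xc 0)) (1 + 0)" by (rule apply_vge[OF bT v])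
    ultimately show ?thesis unfolding 0 op_sub_def op_one_def Hminus_vge by (simp add: vge_uminus)
  next
    case (Suc p')
    then show ?thesis using Xc_vge[of p] unfolding op_sub_def op_one_def Hminus_vge by simp
  qed
qed

lemma GX: "op_mult G Xc = op_one"
proof
  fix p
  show "op_mult G Xc p = op_one p"
  proof (cases p)
    case 0
    have "Rp Xc 0 = 0" unfolding Rp_def by (simp add: fsum_empty)
    then show ?thesis unfolding 0 mult_split[OF Xc_bnd]
      by (simp add: Xc_0 Ginv_right[OF vge_one] op_one_def)
  next
    case (Suc p')
    obtain c where "vge (- Rp Xc p) c" using vge_all by blast
    then show ?thesis unfolding mult_split[OF Xc_bnd] Suc Xc_Suc
      by (simp add: Ginv_right op_one_def)
  qed
qed

lemma XG_apply: "op_apply Xc (op_apply G h) = h"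
proof -
  obtain c where c: "vge h c" using vge_all by blast
  have vGh: "vge (op_apply G h) (0 + c)" by (rule apply_vge[OF bG c])
  have "op_apply G (op_apply Xc (op_apply G h)) = op_apply (op_mult G Xc) (op_apply G h)"
    by (rule compose[OF bG Xc_bnd vGh, symmetric])
  also have "\<dots> = op_apply G h" by (simp add: GX apply_one)
  finally show ?thesis by (rule G_inj)
qed

lemma XG: "op_mult Xc G = op_one"
proof (rule faithful)
  fix j
  show "op_apply (op_mult Xc G) (zH^j) = op_apply op_one (zH^j)"
    by (simp add: compose[OF Xc_bnd bG vge_zH] XG_apply apply_one)
qed

lemma op_inv_eq: "op_inv G = Xc"
  unfolding op_inv_def
proof (rule the_equality)
  show "op_sub Xc op_one \<in> Dminus \<and> op_mult G Xc = op_one \<and> op_mult Xc G = op_one"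
    using Xc_Dminus GX XG by simp
  fix Gi assume Gi: "op_sub Gi op_one \<in> Dminus \<and> op_mult G Gi = op_one \<and> op_mult Gi G = op_one"
  have bGi: "bnd Gi 0" using Dminus_bnd Gi by blast
  show "Gi = Xc"
  proof (rule faithful)
    fix j
    have "op_apply G (op_apply Gi (zH^j)) = op_apply (op_mult G Gi) (zH^j)"
      by (rule compose[OF bG bGi vge_zH, symmetric])
    also have "\<dots> = op_apply (op_mult G Xc) (zH^j)" using Gi GX by simp
    also have "\<dots> = op_apply G (op_apply Xc (zH^j))" by (rule compose[OF bG Xc_bnd vge_zH])
    finally show "op_apply Gi (zH^j) = op_apply Xc (zH^j)" by (rule G_inj)
  qed
qed

end

lemma bnd_z: "bnd op_z (-1)"
  unfolding bnd_def op_z_def vge_def zH_def by simp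

lemma zderiv_zH: "zderiv zH = 1"
  by (rule fls_eqI) (simp add: zderiv_nth zH_def)

lemma zpow_zH_SS: "(zderiv^^(Suc (Suc i))) zH = 0"
  by (simp only: funpow_Suc_right o_apply zderiv_zH zderiv_one zpow_lin(6))

lemma mult_z: "op_mult B op_z p = B p * zH + of_nat (Suc p) * B (Suc p)"
proof -
  have "op_mult B op_z p = sum (mt B op_z) {(p, 0, 0), (Suc p, 0, 1)}"
    unfolding op_mult_eq
  proof (rule fsum_finite)
    show "{(p, 0, 0), (Suc p, 0, 1)} \<subseteq> Tset p" unfolding Tset_def by auto
    fix t assume t: "t \<in> Tset p" "t \<notin> {(p, 0, 0), (Suc p, 0, 1)}"
    obtain m n i where tt: "t = (m, n, i)" by (cases t)
    have mi: "i \<le> m" "m + n = p + i" using t(1) unfolding tt Tset_def by auto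
    show "mt B op_z t = 0"
    proof (cases "n = 0")
      case False
      then show ?thesis unfolding tt mt_def by (simp add: op_z_def zpow_lin(6))
    next
      case True
      then have "i \<noteq> 0" "i \<noteq> 1" using t(2) mi unfolding tt by auto
      then obtain i' where ii: "i = Suc (Suc i')" by (metis One_nat_def not0_implies_Suc)
      have z: "(zderiv^^i) zH = 0" by (simp only: ii zpow_zH_SS)
      have "mt B op_z t = of_nat (m choose i) * B m * (zderiv^^i) (op_z n)" unfolding tt mt_def by simp
      also have "\<dots> = 0" using z by (simp add: True op_z_def)
      finally show ?thesis .
    qed
  qed simp
  then show ?thesis by (simp add: mt_def op_z_def zderiv_zH)
qed

context grW
begin

lemma QG: "op_mult (opQ W) Gc = op_mult Gc op_z"
proof -
  interpret s: sato1 Gc by unfold_locales (rule Gc_Dminus)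
  have QW: "opQ W = op_mult (op_mult Gc op_z) s.Xc"
    unfolding opQ_def satoG_eq s.op_inv_eq ..
  have bP: "bnd (op_mult Gc op_z) (0 + -1)" by (rule bnd_mult[OF Gc_bnd(1) bnd_z])
  have bQ: "bnd (op_mult (op_mult Gc op_z) s.Xc) (0 + -1 + 0)" by (rule bnd_mult[OF bP s.Xc_bnd])
  show ?thesis unfolding QW
  proof (rule faithful)
    fix j
    have vG: "vge (op_apply Gc (zH^j)) (0 + - int j)" by (rule apply_vge[OF Gc_bnd(1) vge_zH])
    show "op_apply (op_mult (op_mult (op_mult Gc op_z) s.Xc) Gc) (zH^j) = op_apply (op_mult Gc op_z) (zH^j)"
      by (simp add: compose[OF bQ Gc_bnd(1) vge_zH] compose[OF bP s.Xc_bnd vG] s.XG_apply)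
  qed
qed

end

theorem mainTheorem6:
  fixes W :: "H set" and B :: DOp
  assumes "W \<in> Gr0plus"
    and "B 0 = wavePsi W"
    and "op_mult (opQ W) B = op_mult B op_z"
  shows "B = satoG W"
proof -
  interpret grW W by unfold_locales (rule assms(1))
  have "\<forall>m\<le>n. B m = Gc m" for n
  proof (induction n)
    case 0 then show ?case using assms(2) wavePsi_eq by simp
  next
    case (Suc n)
    have "op_mult (opQ W) B n = op_mult (opQ W) Gc n"
      unfolding op_mult_eq
      by (rule fsum_cong) (use Suc in \<open>auto simp: mt_def Tset_def\<close>)
    then have "B n * zH + of_nat (Suc n) * B (Suc n) = Gc n * zH + of_nat (Suc n) * Gc (Suc n)"
      using assms(3) QG by (metis mult_z)
    then have "of_nat (Suc n) * B (Suc n) = of_nat (Suc n) * Gc (Suc n)" using Suc by simp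
    moreover have "(of_nat (Suc n) :: H) \<noteq> 0" by (rule of_nat_neq_0)
    ultimately have "B (Suc n) = Gc (Suc n)" by simp
    then show ?case using Suc by (auto simp: le_Suc_eq)
  qed
  then show ?thesis using satoG_eq by auto
qed

end
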